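(* Suppose $f$ is $L_f$-smooth, $\mathbf{c}$ is $L_c$-smooth, and there exist $C,G>0$ such that for all $\mathbf{x}$: $\|\nabla f(\mathbf{x})\|\le G$, all subgradients of $h$ and $g$ have norm at most $G$, $\|\nabla\mathbf{c}(\mathbf{x})\|\le G$, $\|\mathbf{c}(\mathbf{x})\|\le C$. Suppose the parameters satisfy $\mu_kL_{\rho_k}\le\frac14$, $\mu_{k+1}\le\mu_k$, $\rho_k\le\rho_{k+1}$, $0<\beta\le1$ for all $k\ge0$. Then for any $k\ge0$, $\mathcal{L}_{\rho_{k+1},\mu_{k+1}}(\mathbf{w}^{k+1})\le\mathcal{L}_{\rho_k,\mu_k}(\mathbf{w}^k)-\frac{(2\mu_k)^{-1}-L_{\rho_k}}{2}\|\mathbf{w}^{k+1}-\mathbf{w}^k\|^2+\frac{\rho_{k+1}-\rho_k}{2}C^2+\Delta_{k+1}+\mu_k\|\mathbf{e}^k\|^2$, where $\Delta_{k+1}:=\frac{|\mu_k-\mu_{k+1}|}{2\mu_{k+1}^2}(C^2+\|\mathbf{x}^{k+1}-\mathbf{z}^{k+1}\|^2)$. Moreover, $\|\mathbf{w}^{k+1}-\mathbf{w}^k\|^2\le\frac{4\mu_k}{1-2\mu_kL_{\rho_k}}\bigl(\mathcal{L}_{\rho_k,\mu_k}(\mathbf{w}^k)-\mathcal{L}_{\rho_{k+1},\mu_{k+1}}(\mathbf{w}^{k+1})+\Delta_{k+1}+\frac{\rho_{k+1}-\rho_k}{2}C^2+\mu_k\|\mathbf{e}^k\|^2\bigr)$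.
   Context: Problem: $\min f(\mathbf{x})+h(\mathbf{x})-g(\mathbf{x})$ s.t. $\mathbf{c}(\mathbf{x})=\mathbf{0}$, $f=\mathbb{E}_\xi[\mathbf{f}(\cdot,\xi)]$, $h,g$ proper closed convex. $Q_\rho(\mathbf{x})=f(\mathbf{x})+\frac{\rho}{2}\|\mathbf{c}(\mathbf{x})\|^2$, which is $L_\rho$-smooth with $L_\rho=\rho(\rho_0^{-1}L_f+G^2+CL_c)$. Potential function $\mathcal{L}_{\rho,\mu}(\mathbf{w})=Q_\rho(\mathbf{x})+h(\mathbf{x})+\frac{1}{2\mu}\|\mathbf{x}-\mathbf{z}\|^2-\mathcal{M}_{\mu g}(\mathbf{z})$ for $\mathbf{w}=(\mathbf{x},\mathbf{z})$, where $\mathcal{M}_{\mu g}(\mathbf{z})=\min_{\mathbf{x}}\{g(\mathbf{x})+\frac{1}{2\mu}\|\mathbf{x}-\mathbf{z}\|^2\}$. Iterates $\mathbf{w}^k=(\mathbf{x}^k,\mathbf{z}^k)$ are generated by MoSSP-P or MoSSP-R: $\mathbf{x}^{k+1}=\mathrm{prox}_{\mu_kh}(\mathbf{z}^k-\mu_k\mathbf{G}^k)$, $\mathbf{z}^{k+1}=\mathbf{z}^k-\beta(\mathrm{prox}_{\mu_kg}(\mathbf{z}^k)-\mathbf{x}^{k+1})$, where $\mathbf{G}^k$ is the stochastic estimator $\mathbf{S}^k$ (Polyak momentum: $\mathbf{S}^k=\mathbf{s}^k+\rho_k\nabla\mathbf{c}(\mathbf{x}^k)\mathbf{c}(\mathbf{x}^k)$,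 $\mathbf{s}^k=(1-\alpha_{k-1})\mathbf{s}^{k-1}+\alpha_{k-1}\nabla\mathbf{f}(\mathbf{x}^k,\xi^k)$) or $\mathbf{D}^k$ (recursive momentum: $\mathbf{D}^k=\mathbf{d}^k+\rho_k\nabla\mathbf{c}(\mathbf{x}^k)\mathbf{c}(\mathbf{x}^k)$, $\mathbf{d}^k=\nabla\mathbf{f}(\mathbf{x}^k,\xi^k)+(1-\alpha_{k-1})(\mathbf{d}^{k-1}-\nabla\mathbf{f}(\mathbf{x}^{k-1},\xi^k))$), and $\mathbf{e}^k:=\mathbf{G}^k-\nabla Q_{\rho_k}(\mathbf{x}^k)$. *)

theory Defs
  imports "HOL-Analysis.Analysis"
begin

definition subdiff :: "('a::real_inner \<Rightarrow> real) \<Rightarrow> 'a \<Rightarrow> 'a set" where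
  "subdiff h x = {u. \<forall>y. h x + inner u (y - x) \<le> h y}"

definition prox :: "real \<Rightarrow> ('a::real_normed_vector \<Rightarrow> real) \<Rightarrow> 'a \<Rightarrow> 'a" where
  "prox mu h v = (THE x. \<forall>y. h x + (norm (x - v))\<^sup>2 / (2 * mu) \<le> h y + (norm (y - v))\<^sup>2 / (2 * mu))"

definition moreau :: "real \<Rightarrow> ('a::real_normed_vector \<Rightarrow> real) \<Rightarrow> 'a \<Rightarrow> real" where
  "moreau mu g z = (INF x. g x + (norm (x - z))\<^sup>2 / (2 * mu))"

definition Qpen :: "('a \<Rightarrow> real) \<Rightarrow> ('a \<Rightarrow> 'b::real_normed_vector) \<Rightarrow> real \<Rightarrow> 'a \<Rightarrow> real" where
  "Qpen f c rho x = f x + rho / 2 * (norm (c x))\<^sup>2"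

text \<open>Gradient of Q_rho: grad f x + rho * (grad c x) c x, where grad c x is the adjoint
  of the derivative (Jacobian) Jc x.\<close>
definition Qgrad :: "('a::real_inner \<Rightarrow> 'a) \<Rightarrow> ('a \<Rightarrow> 'b::real_inner) \<Rightarrow> ('a \<Rightarrow> 'a \<Rightarrow> 'b) \<Rightarrow> real \<Rightarrow> 'a \<Rightarrow> 'a" where
  "Qgrad fgrad c Jc rho x = fgrad x + rho *\<^sub>R adjoint (Jc x) (c x)"

definition Lrho :: "real \<Rightarrow> real \<Rightarrow> real \<Rightarrow> real \<Rightarrow> real \<Rightarrow> real \<Rightarrow> real" where
  "Lrho Lf Lc G C rho0 rho = rho * (Lf / rho0 + G\<^sup>2 + C * Lc)"

definition potential :: "('a::real_normed_vector \<Rightarrow> real) \<Rightarrow> ('a \<Rightarrow> 'b::real_normed_vector) \<Rightarrow>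
    ('a \<Rightarrow> real) \<Rightarrow> ('a \<Rightarrow> real) \<Rightarrow> real \<Rightarrow> real \<Rightarrow> 'a \<Rightarrow> 'a \<Rightarrow> real" where
  "potential f c h g rho mu x z =
     Qpen f c rho x + h x + (norm (x - z))\<^sup>2 / (2 * mu) - moreau mu g z"

end

theory Submission
  imports Defs
begin


lemma sq_add: "(norm (a + b))\<^sup>2 = (norm a)\<^sup>2 + 2 * inner a b + (norm (b::'a::real_inner))\<^sup>2"
  by (simp add: power2_norm_eq_inner inner_add_left inner_add_right inner_commute)

lemma sq_diff: "(norm (a - b))\<^sup>2 = (norm a)\<^sup>2 - 2 * inner a b + (norm (b::'a::real_inner))\<^sup>2"
  by (simp add: power2_norm_eq_inner inner_diff_left inner_diff_right inner_commute)

lemma three_point: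
  fixes g :: "'a::real_inner \<Rightarrow> real"
  assumes cvx: "convex_on UNIV g" and mu: "\<mu> > 0"
    and min: "\<forall>y. g u + (norm (u - v))\<^sup>2 / (2 * \<mu>) \<le> g y + (norm (y - v))\<^sup>2 / (2 * \<mu>)"
  shows "g u + (norm (u - v))\<^sup>2 / (2 * \<mu>) + (norm (y - u))\<^sup>2 / (2 * \<mu>) \<le> g y + (norm (y - v))\<^sup>2 / (2 * \<mu>)"
proof -
  define a where "a = g y - g u + inner (u - v) (y - u) / \<mu>"
  define b where "b = (norm (y - u))\<^sup>2 / (2 * \<mu>)"
  have key: "0 \<le> a + t * b" if t: "0 < t" "t \<le> 1" for t
  proof -
    define w where "w = (1 - t) *\<^sub>R u + t *\<^sub>R y"
    have w2: "w - v = (u - v) + t *\<^sub>R (y - u)" unfolding w_def by (simp add: algebra_simps)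
    have "g u + (norm (u - v))\<^sup>2 / (2 * \<mu>) \<le> g w + (norm (w - v))\<^sup>2 / (2 * \<mu>)" using min by blast
    also have "g w \<le> (1 - t) * g u + t * g y" unfolding w_def using convex_onD[OF cvx, of t u y] t by simp
    also have "(norm (w - v))\<^sup>2 = (norm (u - v))\<^sup>2 + 2 * t * inner (u - v) (y - u) + t\<^sup>2 * (norm (y - u))\<^sup>2"
      unfolding w2 sq_add by (simp add: power_mult_distrib)
    finally have "g u + (norm (u - v))\<^sup>2 / (2 * \<mu>) \<le> (1 - t) * g u + t * g y + ((norm (u - v))\<^sup>2 + (2 * t * inner (u - v) (y - u) + t\<^sup>2 * (norm (y - u))\<^sup>2)) / (2 * \<mu>)"
      by (simp add: add.assoc)
    hence "0 \<le> t * (g y - g u) + (2 * t * inner (u - v) (y - u) + t\<^sup>2 * (norm (y - u))\<^sup>2) / (2 * \<mu>)"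
      using add_divide_distrib[of "(norm (u - v))\<^sup>2" "2 * t * inner (u - v) (y - u) + t\<^sup>2 * (norm (y - u))\<^sup>2" "2 * \<mu>"]
      by (simp only: left_diff_distrib right_diff_distrib)
    also have "\<dots> = t * (a + t * b)" unfolding a_def b_def using mu by (simp add: field_simps power2_eq_square)
    finally show ?thesis using t by (simp add: zero_le_mult_iff)
  qed
  have b0: "b \<ge> 0" unfolding b_def using mu by simp
  have "a \<ge> 0"
  proof (rule ccontr)
    assume na: "\<not> a \<ge> 0"
    show False
    proof (cases "b = 0")
      case True then show False using key[of 1] na by simp
    next
      case False
      hence bp: "b > 0" using b0 by simp
      define t where "t = min 1 (- a / (2 * b))"
      have tp: "0 < t" "t \<le> 1" unfolding t_def using na bp by (auto simp: field_simps)
      have "t \<le> - a / (2 * b)" unfolding t_def by simp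
      hence "t * b \<le> (- a / (2 * b)) * b" using bp by (intro mult_right_mono) auto
      hence "t * b \<le> - a / 2" using bp by simp
      then show False using key[OF tp] na by simp
    qed
  qed
  moreover have "(norm (y - v))\<^sup>2 = (norm (u - v))\<^sup>2 + 2 * inner (u - v) (y - u) + (norm (y - u))\<^sup>2"
    using sq_add[of "u - v" "y - u"] by simp
  moreover have "((norm (u - v))\<^sup>2 + 2 * inner (u - v) (y - u) + (norm (y - u))\<^sup>2) / (2 * \<mu>)
     = (norm (u - v))\<^sup>2 / (2 * \<mu>) + inner (u - v) (y - u) / \<mu> + (norm (y - u))\<^sup>2 / (2 * \<mu>)"
    using mu by (simp add: add_divide_distrib)
  ultimately have e: "(norm (y - v))\<^sup>2 / (2 * \<mu>) = (norm (u - v))\<^sup>2 / (2 * \<mu>) + inner (u - v) (y - u) / \<mu> + (norm (y - u))\<^sup>2 / (2 * \<mu>)"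
    and a0: "a \<ge> 0" by simp_all
  show ?thesis using a0 unfolding e a_def by linarith
qed

lemma convex_lower_linear:
  fixes g :: "'a::euclidean_space \<Rightarrow> real"
  assumes cvx: "convex_on UNIV g"
  shows "\<exists>m K. K \<ge> 0 \<and> g v \<le> m + K \<and> (\<forall>y. g y \<ge> m - K * norm (y - v))"
proof -
  have cont: "continuous_on UNIV g" using convex_on_continuous[OF open_UNIV cvx] .
  obtain m0 where m0: "m0 \<in> cball v 1" "\<forall>y\<in>cball v 1. g m0 \<le> g y"
  proof -
    have "continuous_on (cball v 1) g" using continuous_on_subset[OF cont] by blast
    then show ?thesis using continuous_attains_inf[OF compact_cball, of v 1 g] that by auto
  qed
  define m where "m = g m0"
  define K where "K = g v - m"
  have K0: "K \<ge> 0" unfolding K_def m_def using m0 by simp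
  have "g y \<ge> m - K * norm (y - v)" for y
  proof (cases "norm (y - v) \<le> 1")
    case True
    hence "y \<in> cball v 1" by (simp add: dist_norm norm_minus_commute)
    hence "g y \<ge> m" using m0 m_def by simp
    then show ?thesis using mult_nonneg_nonneg[OF K0 norm_ge_zero, of "y - v"] by linarith
  next
    case False
    define r where "r = norm (y - v)"
    have r1: "r > 1" using False r_def by simp
    define e where "e = (1 - 1 / r) *\<^sub>R v + (1 / r) *\<^sub>R y"
    have "e - v = (1 / r) *\<^sub>R (y - v)" unfolding e_def by (simp add: algebra_simps)
    hence "norm (e - v) = 1" using r1 r_def by (auto simp: norm_minus_commute)
    hence "e \<in> cball v 1" by (simp add: dist_norm norm_minus_commute)
    hence ge: "g e \<ge> m" using m0 m_def by simp
    have "g e \<le> (1 - 1 / r) * g v + (1 / r) * g y"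
      unfolding e_def using convex_onD[OF cvx, of "1 / r" v y] r1 by simp
    hence "r * g e \<le> r * ((1 - 1 / r) * g v + (1 / r) * g y)" using r1 by simp
    also have "\<dots> = (r - 1) * g v + g y" using r1 by (simp add: field_simps)
    finally have "g y \<ge> r * g e - (r - 1) * g v" by simp
    moreover have "r * g e \<ge> r * m" using ge r1 by simp
    moreover have "r * m - (r - 1) * g v = m - (r - 1) * K" unfolding K_def by (simp add: algebra_simps)
    ultimately have "g y \<ge> m - (r - 1) * K" by linarith
    moreover have "(r - 1) * K \<le> r * K" using K0 by (intro mult_right_mono) auto
    ultimately show ?thesis using r_def by (simp add: mult.commute)
  qed
  moreover have "g v \<le> m + K" unfolding K_def by simp
  ultimately show ?thesis using K0 by blast
qed


lemma prox_exists:
  fixes g :: "'a::euclidean_space \<Rightarrow> real"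
  assumes cvx: "convex_on UNIV g" and mu: "\<mu> > 0"
  shows "\<exists>u. \<forall>y. g u + (norm (u - v))\<^sup>2 / (2 * \<mu>) \<le> g y + (norm (y - v))\<^sup>2 / (2 * \<mu>)"
proof -
  obtain m K where K0: "K \<ge> 0" and gvK: "g v \<le> m + K" and low: "\<And>y. g y \<ge> m - K * norm (y - v)"
    using convex_lower_linear[OF cvx, of v] by blast
  have cont: "continuous_on UNIV g" using convex_on_continuous[OF open_UNIV cvx] .
  define F where "F y = g y + (norm (y - v))\<^sup>2 / (2 * \<mu>)" for y
  have contF: "continuous_on UNIV F" unfolding F_def
    by (intro continuous_intros cont) (use mu in auto)
  define R where "R = 4 * \<mu> * K + 1"
  obtain u where u: "u \<in> cball v R" "\<forall>y\<in>cball v R. F u \<le> F y"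
  proof -
    have "R \<ge> 0" unfolding R_def using K0 mu by simp
    hence "cball v R \<noteq> {}" by simp
    moreover have "continuous_on (cball v R) F" using continuous_on_subset[OF contF] by blast
    ultimately show ?thesis using continuous_attains_inf[OF compact_cball, of v R F] that by blast
  qed
  have gv: "F v = g v" unfolding F_def by simp
  have "F u \<le> F y" for y
  proof (cases "y \<in> cball v R")
    case True then show ?thesis using u by blast
  next
    case False
    define r where "r = norm (y - v)"
    have rR: "r > R" using False r_def by (simp add: dist_norm norm_minus_commute)
    have "4 * \<mu> * K \<ge> 0" using K0 mu by simp
    hence r1: "r \<ge> 1" "r - 1 > 4 * \<mu> * K" using rR unfolding R_def by linarith+
    have "r * (r - 1) \<ge> r * (4 * \<mu> * K)" using r1 by (intro mult_left_mono) auto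
    moreover have "r * (4 * \<mu> * K) \<ge> (r + 1) * (2 * \<mu> * K)"
    proof -
      have "2 * r \<ge> r + 1" using r1 by simp
      hence "(2 * r) * (2 * \<mu> * K) \<ge> (r + 1) * (2 * \<mu> * K)" using mu K0 by (intro mult_right_mono) auto
      thus ?thesis by (simp add: algebra_simps)
    qed
    moreover have "r\<^sup>2 = r * (r - 1) + r" by (simp add: power2_eq_square algebra_simps)
    ultimately have "r\<^sup>2 > (r + 1) * (2 * \<mu> * K)" using r1 by linarith
    moreover have "(r + 1) * K * (2 * \<mu>) = (r + 1) * (2 * \<mu> * K)" by (simp add: algebra_simps)
    ultimately have "(r + 1) * K * (2 * \<mu>) < r\<^sup>2" by linarith
    hence "r\<^sup>2 / (2 * \<mu>) > (r + 1) * K" using mu by (intro pos_less_divide_eq[THEN iffD2]) auto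
    moreover have "(r + 1) * K = r * K + K" by (simp add: algebra_simps)
    ultimately have "F y > g v" unfolding F_def using low[of y] r_def gvK by (simp add: mult.commute)
    moreover have "F u \<le> F v" using u K0 mu R_def by simp
    ultimately show ?thesis using gv by simp
  qed
  then show ?thesis unfolding F_def by blast
qed

lemma prox_char:
  fixes g :: "'a::euclidean_space \<Rightarrow> real"
  assumes cvx: "convex_on UNIV g" and mu: "\<mu> > 0"
  shows "g (prox \<mu> g v) + (norm (prox \<mu> g v - v))\<^sup>2 / (2 * \<mu>) + (norm (y - prox \<mu> g v))\<^sup>2 / (2 * \<mu>)
         \<le> g y + (norm (y - v))\<^sup>2 / (2 * \<mu>)"
proof -
  obtain u where u: "\<forall>y. g u + (norm (u - v))\<^sup>2 / (2 * \<mu>) \<le> g y + (norm (y - v))\<^sup>2 / (2 * \<mu>)"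
    using prox_exists[OF cvx mu] by blast
  have "prox \<mu> g v = u"
    unfolding prox_def
  proof (rule the_equality)
    show "\<forall>y. g u + (norm (u - v))\<^sup>2 / (2 * \<mu>) \<le> g y + (norm (y - v))\<^sup>2 / (2 * \<mu>)" by fact
  next
    fix w assume w: "\<forall>y. g w + (norm (w - v))\<^sup>2 / (2 * \<mu>) \<le> g y + (norm (y - v))\<^sup>2 / (2 * \<mu>)"
    have "g u + (norm (u - v))\<^sup>2 / (2 * \<mu>) + (norm (w - u))\<^sup>2 / (2 * \<mu>) \<le> g w + (norm (w - v))\<^sup>2 / (2 * \<mu>)"
      using three_point[OF cvx mu u] .
    moreover have "g w + (norm (w - v))\<^sup>2 / (2 * \<mu>) \<le> g u + (norm (u - v))\<^sup>2 / (2 * \<mu>)" using w by blast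
    ultimately have "(norm (w - u))\<^sup>2 / (2 * \<mu>) \<le> 0" by linarith
    hence "(norm (w - u))\<^sup>2 \<le> 0" using mu by (simp add: divide_le_0_iff)
    thus "w = u" by simp
  qed
  then show ?thesis using three_point[OF cvx mu u] by simp
qed

lemma prox_min:
  fixes g :: "'a::euclidean_space \<Rightarrow> real"
  assumes cvx: "convex_on UNIV g" and mu: "\<mu> > 0"
  shows "g (prox \<mu> g v) + (norm (prox \<mu> g v - v))\<^sup>2 / (2 * \<mu>) \<le> g y + (norm (y - v))\<^sup>2 / (2 * \<mu>)"
proof -
  have "(norm (y - prox \<mu> g v))\<^sup>2 / (2 * \<mu>) \<ge> 0" using mu by simp
  thus ?thesis using prox_char[OF cvx mu, of v y] by linarith
qed

lemma moreau_eq: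
  fixes g :: "'a::euclidean_space \<Rightarrow> real"
  assumes cvx: "convex_on UNIV g" and mu: "\<mu> > 0"
  shows "moreau \<mu> g v = g (prox \<mu> g v) + (norm (prox \<mu> g v - v))\<^sup>2 / (2 * \<mu>)"
  unfolding moreau_def
  by (rule cInf_eq_minimum) (auto intro: prox_min[OF cvx mu])



lemma descent:
  fixes Q :: "'a::real_inner \<Rightarrow> real" and D :: "'a \<Rightarrow> 'a"
  assumes der: "\<And>y. (Q has_derivative (\<lambda>v. inner (D y) v)) (at y)"
    and lip: "\<And>y y'. norm (D y - D y') \<le> L * norm (y - y')"
  shows "Q y \<le> Q x + inner (D x) (y - x) + L / 2 * (norm (y - x))\<^sup>2"
proof -
  define d where "d = y - x"
  define q where "q t = Q (x + t *\<^sub>R d) - t * inner (D x) d - L / 2 * t\<^sup>2 * (norm d)\<^sup>2" for t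
  have dq: "DERIV q t :> inner (D (x + t *\<^sub>R d)) d - inner (D x) d - L * t * (norm d)\<^sup>2" for t
  proof -
    have l: "((\<lambda>t. x + t *\<^sub>R d) has_derivative (\<lambda>h. h *\<^sub>R d)) (at t)"
      by (auto intro!: derivative_eq_intros)
    have "((\<lambda>t. Q (x + t *\<^sub>R d)) has_derivative (\<lambda>h. inner (D (x + t *\<^sub>R d)) (h *\<^sub>R d))) (at t)"
      using has_derivative_compose[OF l der] .
    hence "((\<lambda>t. Q (x + t *\<^sub>R d)) has_field_derivative inner (D (x + t *\<^sub>R d)) d) (at t)"
      by (rule has_derivative_imp_has_field_derivative) simp
    then show ?thesis unfolding q_def
      by (auto intro!: derivative_eq_intros simp: power2_eq_square)
  qed
  have "q 1 \<le> q 0"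
  proof (rule DERIV_nonpos_imp_nonincreasing[of 0 1 q])
    fix t :: real assume t: "0 \<le> t" "t \<le> 1"
    have "inner (D (x + t *\<^sub>R d)) d - inner (D x) d = inner (D (x + t *\<^sub>R d) - D x) d"
      by (simp add: inner_diff_left)
    also have "\<dots> \<le> norm (D (x + t *\<^sub>R d) - D x) * norm d" by (rule norm_cauchy_schwarz)
    also have "\<dots> \<le> (L * norm (t *\<^sub>R d)) * norm d"
      using lip[of "x + t *\<^sub>R d" x] by (intro mult_right_mono) auto
    also have "\<dots> = L * t * (norm d)\<^sup>2" using t by (simp add: power2_eq_square)
    finally show "\<exists>y. DERIV q t :> y \<and> y \<le> 0" using dq by (intro exI[of _ "inner (D (x + t *\<^sub>R d)) d - inner (D x) d - L * t * (norm d)\<^sup>2"]) auto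
  qed simp
  then show ?thesis unfolding q_def d_def by simp
qed



lemma adj_diff_bound:
  fixes A B :: "'a::euclidean_space \<Rightarrow> 'b::euclidean_space"
  assumes "linear A" "linear B"
  shows "norm (adjoint A w - adjoint B w) \<le> onorm (\<lambda>v. A v - B v) * norm w"
proof -
  define p where "p = adjoint A w - adjoint B w"
  have bl: "bounded_linear (\<lambda>v. A v - B v)"
    using assms by (simp add: linear_conv_bounded_linear bounded_linear_sub)
  have "(norm p)\<^sup>2 = inner p (adjoint A w) - inner p (adjoint B w)"
    by (simp add: power2_norm_eq_inner p_def inner_diff_right)
  also have "\<dots> = inner (A p - B p) w"
    using adjoint_works[OF assms(1), of p w] adjoint_works[OF assms(2), of p w] by (simp add: inner_diff_left)
  also have "\<dots> \<le> norm (A p - B p) * norm w" by (rule norm_cauchy_schwarz)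
  also have "\<dots> \<le> onorm (\<lambda>v. A v - B v) * norm p * norm w"
    using onorm[OF bl, of p] by (intro mult_right_mono) auto
  finally have "norm p * norm p \<le> norm p * (onorm (\<lambda>v. A v - B v) * norm w)"
    by (simp add: power2_eq_square algebra_simps)
  then show ?thesis unfolding p_def[symmetric]
    by (cases "norm p = 0") (auto simp: onorm_pos_le[OF bl] intro: mult_nonneg_nonneg)
qed

lemma adj_bound:
  fixes A :: "'a::euclidean_space \<Rightarrow> 'b::euclidean_space"
  assumes "linear A"
  shows "norm (adjoint A w) \<le> onorm A * norm w"
proof -
  define p where "p = adjoint A w"
  have bl: "bounded_linear A"
    using assms by (simp add: linear_conv_bounded_linear)
  have "(norm p)\<^sup>2 = inner p (adjoint A w)"
    by (simp add: power2_norm_eq_inner p_def)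
  also have "\<dots> = inner (A p) w"
    using adjoint_works[OF assms(1), of p w] by simp
  also have "\<dots> \<le> norm (A p) * norm w" by (rule norm_cauchy_schwarz)
  also have "\<dots> \<le> onorm A * norm p * norm w"
    using onorm[OF bl, of p] by (intro mult_right_mono) auto
  finally have "norm p * norm p \<le> norm p * (onorm A * norm w)"
    by (simp add: power2_eq_square algebra_simps)
  then show ?thesis unfolding p_def[symmetric]
    by (cases "norm p = 0") (auto simp: onorm_pos_le[OF bl] intro: mult_nonneg_nonneg)
qed

lemma Q_deriv:
  fixes f :: "'a::euclidean_space \<Rightarrow> real" and c :: "'a \<Rightarrow> 'b::euclidean_space"
  assumes f_grad: "\<forall>y. (f has_derivative (\<lambda>v. inner (fgrad y) v)) (at y)"
    and c_deriv: "\<forall>y. (c has_derivative Jc y) (at y)"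
  shows "(Qpen f c \<rho> has_derivative (\<lambda>v. inner (Qgrad fgrad c Jc \<rho> y) v)) (at y)"
proof -
  have lin: "linear (Jc y)" using c_deriv has_derivative_bounded_linear bounded_linear.linear by blast
  have q: "Qpen f c \<rho> = (\<lambda>x. f x + \<rho> / 2 * inner (c x) (c x))"
    by (rule ext) (simp add: Qpen_def power2_norm_eq_inner)
  have "((\<lambda>x. f x + \<rho> / 2 * inner (c x) (c x)) has_derivative
        (\<lambda>v. inner (fgrad y) v + \<rho> / 2 * (inner (c y) (Jc y v) + inner (Jc y v) (c y)))) (at y)"
    using f_grad c_deriv by (auto intro!: derivative_eq_intros)
  moreover have "(\<lambda>v. inner (fgrad y) v + \<rho> / 2 * (inner (c y) (Jc y v) + inner (Jc y v) (c y)))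
      = (\<lambda>v. inner (Qgrad fgrad c Jc \<rho> y) v)"
  proof
    fix v
    have "inner (adjoint (Jc y) (c y)) v = inner (Jc y v) (c y)"
      using adjoint_works[OF lin, of v "c y"] by (simp add: inner_commute)
    then show "inner (fgrad y) v + \<rho> / 2 * (inner (c y) (Jc y v) + inner (Jc y v) (c y)) = inner (Qgrad fgrad c Jc \<rho> y) v"
      by (simp add: Qgrad_def inner_add_left inner_commute[of "c y"])
  qed
  ultimately show ?thesis unfolding q by simp
qed

lemma Q_lip:
  fixes c :: "'a::euclidean_space \<Rightarrow> 'b::euclidean_space"
  assumes f_smooth: "\<forall>y y'. norm (fgrad y - fgrad y') \<le> Lf * norm (y - y')"
    and c_deriv: "\<forall>y. (c has_derivative Jc y) (at y)"
    and c_smooth: "\<forall>y y'. onorm (\<lambda>v. Jc y v - Jc y' v) \<le> Lc * norm (y - y')"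
    and c_grad_bd: "\<forall>y. onorm (Jc y) \<le> G"
    and c_bd: "\<forall>y. norm (c y) \<le> C"
    and rho0: "\<rho>0 > 0" and rho: "\<rho>0 \<le> \<rho>" and Lf0: "Lf \<ge> 0"
  shows "norm (Qgrad fgrad c Jc \<rho> y - Qgrad fgrad c Jc \<rho> y') \<le> Lrho Lf Lc G C \<rho>0 \<rho> * norm (y - y')"
proof -
  define d where "d = norm (y - y')"
  have lin: "linear (Jc z)" for z using c_deriv has_derivative_bounded_linear bounded_linear.linear by blast
  have G0: "0 \<le> G"
    using onorm_pos_le[of "Jc y"] c_grad_bd c_deriv has_derivative_bounded_linear by (metis order_trans)
  have clip: "norm (c y - c y') \<le> G * d"
    unfolding d_def
    by (rule differentiable_bound[of UNIV c Jc G]) (use c_deriv c_grad_bd in \<open>auto intro: has_derivative_at_withinI\<close>)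
  have a1: "norm (adjoint (Jc y) (c y) - adjoint (Jc y') (c y)) \<le> Lc * d * C"
  proof -
    have "norm (adjoint (Jc y) (c y) - adjoint (Jc y') (c y)) \<le> onorm (\<lambda>v. Jc y v - Jc y' v) * norm (c y)"
      by (rule adj_diff_bound[OF lin lin])
    also have "\<dots> \<le> Lc * d * C"
    proof -
      have bl: "bounded_linear (\<lambda>v. Jc y v - Jc y' v)"
        using c_deriv has_derivative_bounded_linear bounded_linear_sub by blast
      have "0 \<le> onorm (\<lambda>v. Jc y v - Jc y' v)" by (rule onorm_pos_le[OF bl])
      moreover have "onorm (\<lambda>v. Jc y v - Jc y' v) \<le> Lc * d" using c_smooth d_def by blast
      ultimately show ?thesis using c_bd by (intro mult_mono) auto
    qed
    finally show ?thesis .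
  qed
  have a2: "norm (adjoint (Jc y') (c y) - adjoint (Jc y') (c y')) \<le> G * (G * d)"
  proof -
    have "adjoint (Jc y') (c y) - adjoint (Jc y') (c y') = adjoint (Jc y') (c y - c y')"
      using adjoint_linear[OF lin] by (simp add: linear_diff)
    also have "norm \<dots> \<le> onorm (Jc y') * norm (c y - c y')" by (rule adj_bound[OF lin])
    also have "\<dots> \<le> G * (G * d)"
      using c_grad_bd clip G0 by (intro mult_mono) (auto intro!: onorm_pos_le linear_conv_bounded_linear[THEN iffD1] lin)
    finally show ?thesis .
  qed
  have "Qgrad fgrad c Jc \<rho> y - Qgrad fgrad c Jc \<rho> y' = (fgrad y - fgrad y')
     + \<rho> *\<^sub>R ((adjoint (Jc y) (c y) - adjoint (Jc y') (c y)) + (adjoint (Jc y') (c y) - adjoint (Jc y') (c y')))"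
    by (simp add: Qgrad_def algebra_simps)
  also have "norm \<dots> \<le> norm (fgrad y - fgrad y') + \<rho> * (norm (adjoint (Jc y) (c y) - adjoint (Jc y') (c y)) + norm (adjoint (Jc y') (c y) - adjoint (Jc y') (c y')))"
  proof -
    let ?P = "adjoint (Jc y) (c y) - adjoint (Jc y') (c y)" and ?R = "adjoint (Jc y') (c y) - adjoint (Jc y') (c y')"
    have r0: "\<rho> \<ge> 0" using rho rho0 by simp
    have "norm ((fgrad y - fgrad y') + \<rho> *\<^sub>R (?P + ?R)) \<le> norm (fgrad y - fgrad y') + norm (\<rho> *\<^sub>R (?P + ?R))"
      by (rule norm_triangle_ineq)
    also have "norm (\<rho> *\<^sub>R (?P + ?R)) = \<rho> * norm (?P + ?R)" using r0 by simp
    also have "\<rho> * norm (?P + ?R) \<le> \<rho> * (norm ?P + norm ?R)"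
      using r0 norm_triangle_ineq[of ?P ?R] by (rule mult_left_mono[rotated])
    finally show ?thesis by simp
  qed
  also have "\<dots> \<le> Lf * d + \<rho> * (Lc * d * C + G * (G * d))"
    using f_smooth a1 a2 rho rho0 d_def by (intro add_mono mult_left_mono) auto
  also have "\<dots> \<le> Lrho Lf Lc G C \<rho>0 \<rho> * d"
  proof -
    have "Lf \<le> \<rho> * (Lf / \<rho>0)" using rho rho0 Lf0
      by (simp add: field_simps mult_left_mono[OF rho Lf0, simplified mult.commute])
    hence "Lf * d \<le> \<rho> * (Lf / \<rho>0) * d" using d_def by (intro mult_right_mono) auto
    thus ?thesis unfolding Lrho_def by (simp add: algebra_simps power2_eq_square)
  qed
  finally show ?thesis using d_def by simp
qed



lemma shift_sq:
  fixes a z G :: "'a::real_inner"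
  assumes "\<mu> > 0"
  shows "(norm (a - (z - \<mu> *\<^sub>R G)))\<^sup>2 / (2 * \<mu>) = (norm (a - z))\<^sup>2 / (2 * \<mu>) + inner (a - z) G + \<mu> / 2 * (norm G)\<^sup>2"
proof -
  have h: "a - (z - \<mu> *\<^sub>R G) = (a - z) + \<mu> *\<^sub>R G" by (simp add: algebra_simps)
  have "(norm (a - (z - \<mu> *\<^sub>R G)))\<^sup>2 = (norm (a - z))\<^sup>2 + 2 * \<mu> * inner (a - z) G + \<mu>\<^sup>2 * (norm G)\<^sup>2"
    unfolding h sq_add by (simp add: power_mult_distrib mult.assoc)
  then show ?thesis using assms by (simp add: field_simps power2_eq_square)
qed

lemma young:
  fixes e w :: "'a::real_inner"
  assumes "\<mu> > 0"
  shows "- inner e w \<le> \<mu> * (norm e)\<^sup>2 + (norm w)\<^sup>2 / (4 * \<mu>)"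
proof -
  have "0 \<le> (norm ((2 * \<mu>) *\<^sub>R e + w))\<^sup>2 / (4 * \<mu>)" using assms by simp
  also have "(norm ((2 * \<mu>) *\<^sub>R e + w))\<^sup>2 = 4 * \<mu>\<^sup>2 * (norm e)\<^sup>2 + 4 * \<mu> * inner e w + (norm w)\<^sup>2"
    using sq_add[of "(2 * \<mu>) *\<^sub>R e" w] by (simp add: power_mult_distrib)
  finally show ?thesis using assms by (simp add: field_simps power2_eq_square)
qed

lemma zstep:
  fixes x1 z0 z1 u u1 :: "'a::real_inner"
  assumes b: "0 < \<beta>" "\<beta> \<le> 1" and z1: "z1 = z0 - \<beta> *\<^sub>R (u - x1)"
  shows "(norm (x1 - z1))\<^sup>2 - (norm (u1 - u))\<^sup>2 + (norm (u1 - z0))\<^sup>2 - (norm (u1 - z1))\<^sup>2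
         \<le> (norm (x1 - z0))\<^sup>2 - 2 * (norm (z1 - z0))\<^sup>2 + (norm (z1 - z0))\<^sup>2"
proof -
  define w where "w = u - x1"
  define p where "p = u1 - u"
  define q where "q = x1 - z0"
  have e1: "x1 - z1 = q + \<beta> *\<^sub>R w" unfolding z1 w_def q_def by (simp add: algebra_simps)
  have e2: "u1 - z0 = p + w + q" unfolding p_def w_def q_def by (simp add: algebra_simps)
  have e3: "u1 - z1 = p + w + q + \<beta> *\<^sub>R w" unfolding z1 p_def w_def q_def by (simp add: algebra_simps)
  have e4: "z1 - z0 = - (\<beta> *\<^sub>R w)" unfolding z1 w_def by simp
  have nn: "0 \<le> inner (p + \<beta> *\<^sub>R w) (p + \<beta> *\<^sub>R w)" by simp
  have "\<beta> * (\<beta> - 1) \<le> 0" using b by (simp add: mult_nonneg_nonpos)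
  hence bb: "\<beta> * (\<beta> - 1) * inner w w \<le> 0" by (rule mult_nonpos_nonneg) simp
  show ?thesis
    unfolding e1 e2 e3 e4 q_def[symmetric] p_def[symmetric] power2_norm_eq_inner
    using nn bb
    by (simp add: inner_add_left inner_add_right inner_commute algebra_simps power2_eq_square)
qed



lemma lin_help:
  fixes q1 :: real
  shows "q1 \<le> q0 + dd + Lt \<Longrightarrow> h1 + (a1 + i1 + s) + n2 \<le> h0 + (a0 + i0 + s) \<Longrightarrow> - ie \<le> me + n4
    \<Longrightarrow> i1 - i0 = ig \<Longrightarrow> dd = ig - ie \<Longrightarrow> n4 - n2 + Lt = - K \<Longrightarrow> q1 + h1 + a1 \<le> q0 + h0 + a0 + me - K"
  by linarith

theorem lemmaC2:
  fixes f :: "'a::euclidean_space \<Rightarrow> real" and fgrad :: "'a \<Rightarrow> 'a"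
    and c :: "'a \<Rightarrow> 'b::euclidean_space" and Jc :: "'a \<Rightarrow> 'a \<Rightarrow> 'b"
    and h g :: "'a \<Rightarrow> real"
    and sg :: "'a \<Rightarrow> 'xi \<Rightarrow> 'a" and \<xi> :: "nat \<Rightarrow> 'xi"
    and Lf Lc C G \<beta> :: real
    and \<mu> \<rho> \<alpha> :: "nat \<Rightarrow> real"
    and x z s d Gk :: "nat \<Rightarrow> 'a"
    and k :: nat
  assumes f_grad: "\<forall>y. (f has_derivative (\<lambda>v. inner (fgrad y) v)) (at y)"
    and f_smooth: "\<forall>y y'. norm (fgrad y - fgrad y') \<le> Lf * norm (y - y')"
    and c_deriv: "\<forall>y. (c has_derivative Jc y) (at y)"
    and c_smooth: "\<forall>y y'. onorm (\<lambda>v. Jc y v - Jc y' v) \<le> Lc * norm (y - y')"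
    and C_pos: "C > 0" and G_pos: "G > 0"
    and f_grad_bd: "\<forall>y. norm (fgrad y) \<le> G"
    and h_convex: "convex_on UNIV h" and g_convex: "convex_on UNIV g"
    and h_subgrad_bd: "\<forall>y. \<forall>u\<in>subdiff h y. norm u \<le> G"
    and g_subgrad_bd: "\<forall>y. \<forall>u\<in>subdiff g y. norm u \<le> G"
    and c_grad_bd: "\<forall>y. onorm (Jc y) \<le> G"
    and c_bd: "\<forall>y. norm (c y) \<le> C"
    and mu_pos: "\<forall>j. \<mu> j > 0" and rho0_pos: "\<rho> 0 > 0"
    and step: "\<forall>j. \<mu> j * Lrho Lf Lc G C (\<rho> 0) (\<rho> j) \<le> 1 / 4"
    and mu_mono: "\<forall>j. \<mu> (Suc j) \<le> \<mu> j"
    and rho_mono: "\<forall>j. \<rho> j \<le> \<rho> (Suc j)"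
    and beta: "0 < \<beta>" "\<beta> \<le> 1"
    and x_upd: "\<forall>j. x (Suc j) = prox (\<mu> j) h (z j - \<mu> j *\<^sub>R Gk j)"
    and z_upd: "\<forall>j. z (Suc j) = z j - \<beta> *\<^sub>R (prox (\<mu> j) g (z j) - x (Suc j))"
    and estimator:
      "((\<forall>j. Gk j = s j + \<rho> j *\<^sub>R adjoint (Jc (x j)) (c (x j))) \<and>
        (\<forall>j. s (Suc j) = (1 - \<alpha> j) *\<^sub>R s j + \<alpha> j *\<^sub>R sg (x (Suc j)) (\<xi> (Suc j))))
       \<or>
       ((\<forall>j. Gk j = d j + \<rho> j *\<^sub>R adjoint (Jc (x j)) (c (x j))) \<and>
        (\<forall>j. d (Suc j) = sg (x (Suc j)) (\<xi> (Suc j)) + (1 - \<alpha> j) *\<^sub>R (d j - sg (x j) (\<xi> (Suc j)))))"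
  shows
    "potential f c h g (\<rho> (Suc k)) (\<mu> (Suc k)) (x (Suc k)) (z (Suc k))
       \<le> potential f c h g (\<rho> k) (\<mu> k) (x k) (z k)
         - (1 / (2 * \<mu> k) - Lrho Lf Lc G C (\<rho> 0) (\<rho> k)) / 2
             * ((norm (x (Suc k) - x k))\<^sup>2 + (norm (z (Suc k) - z k))\<^sup>2)
         + (\<rho> (Suc k) - \<rho> k) / 2 * C\<^sup>2
         + \<bar>\<mu> k - \<mu> (Suc k)\<bar> / (2 * (\<mu> (Suc k))\<^sup>2) * (C\<^sup>2 + (norm (x (Suc k) - z (Suc k)))\<^sup>2)
         + \<mu> k * (norm (Gk k - Qgrad fgrad c Jc (\<rho> k) (x k)))\<^sup>2
     \<and> (norm (x (Suc k) - x k))\<^sup>2 + (norm (z (Suc k) - z k))\<^sup>2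
       \<le> 4 * \<mu> k / (1 - 2 * \<mu> k * Lrho Lf Lc G C (\<rho> 0) (\<rho> k))
         * (potential f c h g (\<rho> k) (\<mu> k) (x k) (z k)
            - potential f c h g (\<rho> (Suc k)) (\<mu> (Suc k)) (x (Suc k)) (z (Suc k))
            + \<bar>\<mu> k - \<mu> (Suc k)\<bar> / (2 * (\<mu> (Suc k))\<^sup>2) * (C\<^sup>2 + (norm (x (Suc k) - z (Suc k)))\<^sup>2)
            + (\<rho> (Suc k) - \<rho> k) / 2 * C\<^sup>2
            + \<mu> k * (norm (Gk k - Qgrad fgrad c Jc (\<rho> k) (x k)))\<^sup>2)"
proof -
  define \<mu>0 where "\<mu>0 = \<mu> k"
  define \<mu>1 where "\<mu>1 = \<mu> (Suc k)"
  define \<rho>k where "\<rho>k = \<rho> k"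
  define \<rho>1 where "\<rho>1 = \<rho> (Suc k)"
  define L where "L = Lrho Lf Lc G C (\<rho> 0) (\<rho> k)"
  define x0 where "x0 = x k"
  define x1 where "x1 = x (Suc k)"
  define z0 where "z0 = z k"
  define z1 where "z1 = z (Suc k)"
  define E where "E = Gk k - Qgrad fgrad c Jc (\<rho> k) (x k)"
  define Q where "Q = Qpen f c \<rho>k"
  define D where "D = Qgrad fgrad c Jc \<rho>k"
  have mu0: "\<mu>0 > 0" and mu1: "\<mu>1 > 0" and mu10: "\<mu>1 \<le> \<mu>0"
    using mu_pos mu_mono unfolding \<mu>0_def \<mu>1_def by auto
  have rho_ge: "\<rho> 0 \<le> \<rho> j" for j
  proof (induction j)
    case (Suc j) then show ?case using rho_mono[rule_format, of j] by linarith
  qed simp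
  have rk: "\<rho> 0 \<le> \<rho>k" and r10: "\<rho>k \<le> \<rho>1" unfolding \<rho>k_def \<rho>1_def using rho_ge rho_mono by auto
  obtain b :: 'a where b: "b \<in> Basis" using nonempty_Basis by blast
  have Lf0: "Lf \<ge> 0"
    using f_smooth[rule_format, of b 0] b by (metis norm_Basis diff_zero mult_1_right norm_ge_zero order_trans)
  have Lc0: "Lc \<ge> 0"
  proof -
    have bl: "bounded_linear (\<lambda>v. Jc b v - Jc 0 v)"
      using c_deriv has_derivative_bounded_linear bounded_linear_sub by blast
    show ?thesis using onorm_pos_le[OF bl] c_smooth[rule_format, of b 0] b by (simp add: norm_Basis)
  qed
  have L0: "L \<ge> 0" unfolding L_def Lrho_def using Lf0 Lc0 C_pos rho0_pos rho_ge[of k]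
    by (intro mult_nonneg_nonneg add_nonneg_nonneg) auto
  have muL: "\<mu>0 * L \<le> 1 / 4" using step unfolding \<mu>0_def L_def by blast
  have desc: "Q x1 \<le> Q x0 + inner (D x0) (x1 - x0) + L / 2 * (norm (x1 - x0))\<^sup>2"
    unfolding Q_def D_def L_def
  proof (rule descent)
    show "(Qpen f c \<rho>k has_derivative (\<lambda>v. inner (Qgrad fgrad c Jc \<rho>k y) v)) (at y)" for y
      by (rule Q_deriv[OF f_grad c_deriv])
    show "norm (Qgrad fgrad c Jc \<rho>k y - Qgrad fgrad c Jc \<rho>k y') \<le> Lrho Lf Lc G C (\<rho> 0) (\<rho> k) * norm (y - y')" for y y'
      unfolding \<rho>k_def by (rule Q_lip[OF f_smooth c_deriv c_smooth c_grad_bd c_bd rho0_pos rho_ge Lf0])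
  qed
  have px: "h x1 + (norm (x1 - (z0 - \<mu>0 *\<^sub>R Gk k)))\<^sup>2 / (2 * \<mu>0) + (norm (x0 - x1))\<^sup>2 / (2 * \<mu>0)
      \<le> h x0 + (norm (x0 - (z0 - \<mu>0 *\<^sub>R Gk k)))\<^sup>2 / (2 * \<mu>0)"
    using prox_char[OF h_convex mu0, of "z0 - \<mu>0 *\<^sub>R Gk k" x0] x_upd unfolding x1_def z0_def \<mu>0_def by simp
  have yg: "- inner E (x1 - x0) \<le> \<mu>0 * (norm E)\<^sup>2 + (norm (x1 - x0))\<^sup>2 / (4 * \<mu>0)"
    by (rule young[OF mu0])
  have ED: "D x0 = Gk k - E" unfolding E_def D_def x0_def \<rho>k_def by simp
  have xstep: "Q x1 + h x1 + (norm (x1 - z0))\<^sup>2 / (2 * \<mu>0)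
      \<le> Q x0 + h x0 + (norm (x0 - z0))\<^sup>2 / (2 * \<mu>0) + \<mu>0 * (norm E)\<^sup>2
         - (1 / (2 * \<mu>0) - L) / 2 * (norm (x1 - x0))\<^sup>2"
  proof -
    have i1: "inner (x1 - z0) (Gk k) - inner (x0 - z0) (Gk k) = inner (Gk k) (x1 - x0)"
      by (simp add: inner_diff_left inner_diff_right inner_commute)
    have i2: "inner (D x0) (x1 - x0) = inner (Gk k) (x1 - x0) - inner E (x1 - x0)"
      unfolding ED by (simp add: inner_diff_left)
    have n: "(norm (x0 - x1))\<^sup>2 = (norm (x1 - x0))\<^sup>2" by (simp add: norm_minus_commute)
    have c1: "(norm (x1 - x0))\<^sup>2 / (4 * \<mu>0) - (norm (x1 - x0))\<^sup>2 / (2 * \<mu>0) + L / 2 * (norm (x1 - x0))\<^sup>2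
       = - ((1 / (2 * \<mu>0) - L) / 2 * (norm (x1 - x0))\<^sup>2)"
      using mu0 by (simp add: field_simps)
    show ?thesis
      by (rule lin_help[OF desc px[unfolded shift_sq[OF mu0] n] yg i1 i2 c1])
  qed
  define u where "u = prox \<mu>0 g z0"
  define u1 where "u1 = prox \<mu>0 g z1"
  have z1e: "z1 = z0 - \<beta> *\<^sub>R (u - x1)" using z_upd unfolding z1_def z0_def u_def \<mu>0_def x1_def by simp
  have M0: "moreau \<mu>0 g z0 = g u + (norm (u - z0))\<^sup>2 / (2 * \<mu>0)" unfolding u_def by (rule moreau_eq[OF g_convex mu0])
  have M1: "moreau \<mu>0 g z1 = g u1 + (norm (u1 - z1))\<^sup>2 / (2 * \<mu>0)" unfolding u1_def by (rule moreau_eq[OF g_convex mu0])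
  have pu: "g u + (norm (u - z0))\<^sup>2 / (2 * \<mu>0) + (norm (u1 - u))\<^sup>2 / (2 * \<mu>0) \<le> g u1 + (norm (u1 - z0))\<^sup>2 / (2 * \<mu>0)"
    unfolding u_def by (rule prox_char[OF g_convex mu0])
  have zs: "(norm (x1 - z1))\<^sup>2 - (norm (u1 - u))\<^sup>2 + (norm (u1 - z0))\<^sup>2 - (norm (u1 - z1))\<^sup>2
         \<le> (norm (x1 - z0))\<^sup>2 - 2 * (norm (z1 - z0))\<^sup>2 + (norm (z1 - z0))\<^sup>2"
    by (rule zstep[OF beta z1e])
  have zstep2: "(norm (x1 - z1))\<^sup>2 / (2 * \<mu>0) - moreau \<mu>0 g z1
      \<le> (norm (x1 - z0))\<^sup>2 / (2 * \<mu>0) - moreau \<mu>0 g z0 - (1 / (2 * \<mu>0) - L) / 2 * (norm (z1 - z0))\<^sup>2"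
  proof -
    have "((norm (x1 - z1))\<^sup>2 - (norm (u1 - u))\<^sup>2 + (norm (u1 - z0))\<^sup>2 - (norm (u1 - z1))\<^sup>2) / (2 * \<mu>0)
       \<le> ((norm (x1 - z0))\<^sup>2 - 2 * (norm (z1 - z0))\<^sup>2 + (norm (z1 - z0))\<^sup>2) / (2 * \<mu>0)"
      using zs mu0 by (intro divide_right_mono) auto
    hence a: "(norm (x1 - z1))\<^sup>2 / (2 * \<mu>0) - (norm (u1 - u))\<^sup>2 / (2 * \<mu>0) + (norm (u1 - z0))\<^sup>2 / (2 * \<mu>0) - (norm (u1 - z1))\<^sup>2 / (2 * \<mu>0)
       \<le> (norm (x1 - z0))\<^sup>2 / (2 * \<mu>0) - (norm (z1 - z0))\<^sup>2 / (2 * \<mu>0)"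
      using mu0 by (simp add: diff_divide_distrib add_divide_distrib)
    have b: "(1 / (2 * \<mu>0) - L) / 2 * (norm (z1 - z0))\<^sup>2 \<le> (norm (z1 - z0))\<^sup>2 / (2 * \<mu>0)"
    proof -
      have "(1 / (2 * \<mu>0) - L) / 2 \<le> 1 / (2 * \<mu>0)" using L0 mu0 by (simp add: field_simps)
      hence "(1 / (2 * \<mu>0) - L) / 2 * (norm (z1 - z0))\<^sup>2 \<le> 1 / (2 * \<mu>0) * (norm (z1 - z0))\<^sup>2"
        by (intro mult_right_mono) auto
      thus ?thesis by simp
    qed
    show ?thesis unfolding M0 M1 using a b pu by linarith
  qed
  define Dl where "Dl = \<bar>\<mu>0 - \<mu>1\<bar> / (2 * \<mu>1\<^sup>2) * (C\<^sup>2 + (norm (x1 - z1))\<^sup>2)"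
  have pch: "potential f c h g \<rho>1 \<mu>1 x1 z1 \<le> Q x1 + h x1 + (norm (x1 - z1))\<^sup>2 / (2 * \<mu>0) - moreau \<mu>0 g z1
      + (\<rho>1 - \<rho>k) / 2 * C\<^sup>2 + Dl"
  proof -
    have q: "Qpen f c \<rho>1 x1 \<le> Q x1 + (\<rho>1 - \<rho>k) / 2 * C\<^sup>2"
    proof -
      have "(norm (c x1))\<^sup>2 \<le> C\<^sup>2" using c_bd by (intro power_mono) auto
      hence "(\<rho>1 - \<rho>k) / 2 * (norm (c x1))\<^sup>2 \<le> (\<rho>1 - \<rho>k) / 2 * C\<^sup>2" using r10 by (intro mult_left_mono) auto
      moreover have "Qpen f c \<rho>1 x1 = Q x1 + (\<rho>1 - \<rho>k) / 2 * (norm (c x1))\<^sup>2"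
        unfolding Q_def Qpen_def by (simp add: field_simps)
      ultimately show ?thesis by linarith
    qed
    define N where "N = (norm (x1 - z1))\<^sup>2"
    have N0: "N \<ge> 0" unfolding N_def by simp
    have nq: "N / (2 * \<mu>1) \<le> N / (2 * \<mu>0) + \<bar>\<mu>0 - \<mu>1\<bar> / (2 * \<mu>1\<^sup>2) * N"
    proof -
      have "1 / (2 * \<mu>1) - 1 / (2 * \<mu>0) = (\<mu>0 - \<mu>1) / (2 * \<mu>0 * \<mu>1)" using mu0 mu1 by (simp add: field_simps)
      also have "\<dots> \<le> (\<mu>0 - \<mu>1) / (2 * \<mu>1 * \<mu>1)"
        using mu0 mu1 mu10 by (intro divide_left_mono mult_mono) auto
      also have "\<dots> = \<bar>\<mu>0 - \<mu>1\<bar> / (2 * \<mu>1\<^sup>2)" using mu10 by (simp add: power2_eq_square)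
      finally have "(1 / (2 * \<mu>1) - 1 / (2 * \<mu>0)) * N \<le> \<bar>\<mu>0 - \<mu>1\<bar> / (2 * \<mu>1\<^sup>2) * N"
        using N0 by (intro mult_right_mono) auto
      thus ?thesis by (simp add: algebra_simps)
    qed
    have mm: "moreau \<mu>0 g z1 \<le> moreau \<mu>1 g z1"
    proof -
      define v where "v = prox \<mu>1 g z1"
      have "moreau \<mu>0 g z1 \<le> g v + (norm (v - z1))\<^sup>2 / (2 * \<mu>0)"
        unfolding moreau_eq[OF g_convex mu0] by (rule prox_min[OF g_convex mu0])
      also have "(norm (v - z1))\<^sup>2 / (2 * \<mu>0) \<le> (norm (v - z1))\<^sup>2 / (2 * \<mu>1)"
        using mu1 mu10 by (intro divide_left_mono) auto
      finally show ?thesis unfolding moreau_eq[OF g_convex mu1] v_def by simp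
    qed
    have dl: "\<bar>\<mu>0 - \<mu>1\<bar> / (2 * \<mu>1\<^sup>2) * C\<^sup>2 \<ge> 0" by simp
    have "Dl = \<bar>\<mu>0 - \<mu>1\<bar> / (2 * \<mu>1\<^sup>2) * C\<^sup>2 + \<bar>\<mu>0 - \<mu>1\<bar> / (2 * \<mu>1\<^sup>2) * N"
      unfolding Dl_def N_def by (simp add: distrib_left)
    then show ?thesis unfolding potential_def using q nq[unfolded N_def] mm dl unfolding N_def by linarith
  qed
  have main: "potential f c h g \<rho>1 \<mu>1 x1 z1 \<le> potential f c h g \<rho>k \<mu>0 x0 z0
      - (1 / (2 * \<mu>0) - L) / 2 * ((norm (x1 - x0))\<^sup>2 + (norm (z1 - z0))\<^sup>2)
      + (\<rho>1 - \<rho>k) / 2 * C\<^sup>2 + Dl + \<mu>0 * (norm E)\<^sup>2"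
    using pch xstep zstep2 unfolding potential_def Q_def[symmetric] by (simp add: algebra_simps)
  have second: "(norm (x1 - x0))\<^sup>2 + (norm (z1 - z0))\<^sup>2 \<le> 4 * \<mu>0 / (1 - 2 * \<mu>0 * L)
      * (potential f c h g \<rho>k \<mu>0 x0 z0 - potential f c h g \<rho>1 \<mu>1 x1 z1 + Dl + (\<rho>1 - \<rho>k) / 2 * C\<^sup>2 + \<mu>0 * (norm E)\<^sup>2)"
  proof -
    define S where "S = (norm (x1 - x0))\<^sup>2 + (norm (z1 - z0))\<^sup>2"
    define B where "B = potential f c h g \<rho>k \<mu>0 x0 z0 - potential f c h g \<rho>1 \<mu>1 x1 z1 + Dl + (\<rho>1 - \<rho>k) / 2 * C\<^sup>2 + \<mu>0 * (norm E)\<^sup>2"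
    define a where "a = (1 / (2 * \<mu>0) - L) / 2"
    have aS: "a * S \<le> B" using main unfolding a_def S_def B_def by linarith
    have den: "1 - 2 * \<mu>0 * L > 0" using muL by linarith
    have ainv: "4 * \<mu>0 / (1 - 2 * \<mu>0 * L) = 1 / a" unfolding a_def using mu0 den by (simp add: field_simps)
    have apos: "a > 0" unfolding a_def using mu0 den by (simp add: field_simps)
    have "S = (1 / a) * (a * S)" using apos by simp
    also have "\<dots> \<le> (1 / a) * B" using aS apos by (intro mult_left_mono) auto
    finally show ?thesis unfolding ainv[symmetric] S_def B_def .
  qed
  show ?thesis
    using main second
    unfolding \<mu>0_def \<mu>1_def \<rho>k_def \<rho>1_def L_def x0_def x1_def z0_def z1_def E_def Dl_def
    by simp
qed

end
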